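(* Let $\pi\in\Pi$, $\alpha<\beta$ and $\delta>0$ with $d_\Xi(\Xi^\pi(\alpha),\Xi^\pi(\beta))\le\delta$, and let $\theta=d_k(\pi(\alpha),\pi(\beta))$ (so $\theta\le\delta$). Let $\tilde\pi\in\Pi$ be any strategy that coincides with $\pi$ on $[0,\beta]$ and on $[\beta,\beta+\theta]$ performs the canonical transition from $\pi(\beta)$ to $\pi(\alpha)$: each robot $r$ moves at unit speed along a fixed shortest path from $\pi_r(\beta)$ to $\pi_r(\alpha)$ and then waits there until time $\beta+\theta$. Then, with $\Gamma=[\alpha,\beta+\theta]$, $$\tilde\pi_r(\beta+\theta)=\pi_r(\alpha)\ \ \forall r,\qquad \sup_{t\in\Gamma}M^{\tilde\pi}(t)\le\sup_{t\in[\alpha,\beta]}M^\pi(t)+\phi_{\max}\delta.$$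
   Context: Let $G=(V,E,A,\phi)$ be a finite connected undirected graph with node set $V$, edge set $E$, edge lengths $A:E\to\mathbb{R}_{>0}$, node weights $\phi:V\to\mathbb{R}_{>0}$, $\phi_{\max}=\max_v\phi(v)$; $|G|$ its metric graph with shortest-path metric $d$. Fix $k\ge1$ robots; $d_k(p,p')=\max_i d(p_i,p'_i)$; $\Pi=\{\pi\in C([0,\infty),|G|^k): d_k(\pi(t),\pi(t'))\le|t-t'|\}$. For $v\in V$, $t\ge0$: $\tau^\pi(v,t)=\sup\{t'\le t:\pi_r(t')=v\text{ for some }r\}$ if nonempty, else $0$; $L^\pi_v(t)=t-\tau^\pi(v,t)$; $M^\pi(t)=\max_v\phi(v)L^\pi_v(t)$. Joint state $\Xi^\pi(t)=(\pi(t),(L^\pi_v(t))_{v\in V})$ with metric $d_\Xi((p,L),(p',L'))=\max\{d_k(p,p'),\max_v|L_v-L'_v|\}$. *)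

theory Defs
  imports Complex_Main
begin

(* A weighted graph G = (V,E,A,phi): nodes, abstract edges with an endpoint map,
   edge lengths A = len, node weights phi = wt. *)
record ('v,'e) mgraph =
  nodes :: "'v set"
  edges :: "'e set"
  ends  :: "'e \<Rightarrow> 'v \<times> 'v"
  len   :: "'e \<Rightarrow> real"
  wt    :: "'v \<Rightarrow> real"

fun walk :: "('v,'e) mgraph \<Rightarrow> 'v \<Rightarrow> 'e list \<Rightarrow> 'v \<Rightarrow> bool" where
  "walk G u [] v = (u = v)"
| "walk G u (e # es) v =
     (e \<in> edges G \<and> (\<exists>w. (ends G e = (u, w) \<or> ends G e = (w, u)) \<and> walk G w es v))"

definition wf_graph :: "('v,'e) mgraph \<Rightarrow> bool" where
  "wf_graph G \<longleftrightarrow>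
     finite (nodes G) \<and> nodes G \<noteq> {} \<and> finite (edges G) \<and>
     (\<forall>e\<in>edges G. fst (ends G e) \<in> nodes G \<and> snd (ends G e) \<in> nodes G
                    \<and> fst (ends G e) \<noteq> snd (ends G e) \<and> len G e > 0) \<and>
     inj_on (\<lambda>e. {fst (ends G e), snd (ends G e)}) (edges G) \<and>
     (\<forall>v\<in>nodes G. wt G v > 0) \<and>
     (\<forall>u\<in>nodes G. \<forall>v\<in>nodes G. \<exists>es. walk G u es v)"

definition node_dist :: "('v,'e) mgraph \<Rightarrow> 'v \<Rightarrow> 'v \<Rightarrow> real" where
  "node_dist G u v = Inf {sum_list (map (len G) es) | es. walk G u es v}"

(* points of the metric graph |G|: a node, or an interior point of an edge e at
   distance x (0 < x < len e) from fst (ends e) *)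
datatype ('v,'e) pt = Node 'v | Inner 'e real

definition pts :: "('v,'e) mgraph \<Rightarrow> ('v,'e) pt set" where
  "pts G = Node ` nodes G \<union> {Inner e x | e x. e \<in> edges G \<and> 0 < x \<and> x < len G e}"

fun anchors :: "('v,'e) mgraph \<Rightarrow> ('v,'e) pt \<Rightarrow> ('v \<times> real) set" where
  "anchors G (Node v) = {(v, 0)}"
| "anchors G (Inner e x) = {(fst (ends G e), x), (snd (ends G e), len G e - x)}"

definition dist_via :: "('v,'e) mgraph \<Rightarrow> ('v,'e) pt \<Rightarrow> ('v,'e) pt \<Rightarrow> real" where
  "dist_via G p q =
     Min ((\<lambda>((u,a),(w,b)). a + node_dist G u w + b) ` (anchors G p \<times> anchors G q))"

fun gdist :: "('v,'e) mgraph \<Rightarrow> ('v,'e) pt \<Rightarrow> ('v,'e) pt \<Rightarrow> real" where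
  "gdist G (Inner e x) (Inner e' y) =
     (if e = e' then min \<bar>x - y\<bar> (dist_via G (Inner e x) (Inner e' y))
      else dist_via G (Inner e x) (Inner e' y))"
| "gdist G p q = dist_via G p q"

(* configurations of k robots: robots indexed by r < k *)
definition dk :: "('v,'e) mgraph \<Rightarrow> nat \<Rightarrow> (nat \<Rightarrow> ('v,'e) pt) \<Rightarrow> (nat \<Rightarrow> ('v,'e) pt) \<Rightarrow> real" where
  "dk G k p p' = Max ((\<lambda>i. gdist G (p i) (p' i)) ` {..<k})"

(* the strategy set Pi: 1-Lipschitz maps [0,oo) -> |G|^k (continuity follows) *)
definition strategy :: "('v,'e) mgraph \<Rightarrow> nat \<Rightarrow> (real \<Rightarrow> nat \<Rightarrow> ('v,'e) pt) \<Rightarrow> bool" where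
  "strategy G k \<pi> \<longleftrightarrow>
     (\<forall>t\<ge>0. \<forall>r<k. \<pi> t r \<in> pts G) \<and>
     (\<forall>t t'. t \<ge> 0 \<longrightarrow> t' \<ge> 0 \<longrightarrow> dk G k (\<pi> t) (\<pi> t') \<le> \<bar>t - t'\<bar>)"

definition last_visit :: "nat \<Rightarrow> (real \<Rightarrow> nat \<Rightarrow> ('v,'e) pt) \<Rightarrow> 'v \<Rightarrow> real \<Rightarrow> real" where
  "last_visit k \<pi> v t =
     (let S = {t'. 0 \<le> t' \<and> t' \<le> t \<and> (\<exists>r<k. \<pi> t' r = Node v)} in
      if S \<noteq> {} then Sup S else 0)"

definition latency :: "nat \<Rightarrow> (real \<Rightarrow> nat \<Rightarrow> ('v,'e) pt) \<Rightarrow> 'v \<Rightarrow> real \<Rightarrow> real" where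
  "latency k \<pi> v t = t - last_visit k \<pi> v t"

definition Mcost :: "('v,'e) mgraph \<Rightarrow> nat \<Rightarrow> (real \<Rightarrow> nat \<Rightarrow> ('v,'e) pt) \<Rightarrow> real \<Rightarrow> real" where
  "Mcost G k \<pi> t = Max ((\<lambda>v. wt G v * latency k \<pi> v t) ` nodes G)"

definition phi_max :: "('v,'e) mgraph \<Rightarrow> real" where
  "phi_max G = Max (wt G ` nodes G)"

definition dXi :: "('v,'e) mgraph \<Rightarrow> nat \<Rightarrow> (real \<Rightarrow> nat \<Rightarrow> ('v,'e) pt) \<Rightarrow> real \<Rightarrow> real \<Rightarrow> real" where
  "dXi G k \<pi> a b =
     max (dk G k (\<pi> a) (\<pi> b))
         (Max ((\<lambda>v. \<bar>latency k \<pi> v a - latency k \<pi> v b\<bar>) ` nodes G))"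

definition geodesic :: "('v,'e) mgraph \<Rightarrow> (real \<Rightarrow> ('v,'e) pt) \<Rightarrow> ('v,'e) pt \<Rightarrow> ('v,'e) pt \<Rightarrow> bool" where
  "geodesic G \<gamma> p q \<longleftrightarrow>
     \<gamma> 0 = p \<and> \<gamma> (gdist G p q) = q \<and>
     (\<forall>s\<in>{0..gdist G p q}. \<gamma> s \<in> pts G) \<and>
     (\<forall>s\<in>{0..gdist G p q}. \<forall>s'\<in>{0..gdist G p q}. gdist G (\<gamma> s) (\<gamma> s') = \<bar>s - s'\<bar>)"

end

theory Submission
  imports Defs
begin

lemma walk_edges: "walk G u es w \<Longrightarrow> set es \<subseteq> edges G"
  by (induction es arbitrary: u) auto

lemma node_dist_nonneg:
  assumes "wf_graph G" "u \<in> nodes G" "w \<in> nodes G"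
  shows "node_dist G u w \<ge> 0"
proof -
  obtain es where es: "walk G u es w" using assms unfolding wf_graph_def by blast
  have pos: "\<forall>e\<in>edges G. len G e > 0" using assms(1) unfolding wf_graph_def by blast
  show ?thesis unfolding node_dist_def
  proof (rule cInf_greatest)
    show "{sum_list (map (len G) es) |es. walk G u es w} \<noteq> {}" using es by blast
  next
    fix x assume "x \<in> {sum_list (map (len G) es) |es. walk G u es w}"
    then obtain fs where x: "x = sum_list (map (len G) fs)" and fs: "walk G u fs w" by blast
    have "set fs \<subseteq> edges G" using walk_edges[OF fs] .
    hence "\<forall>y\<in>set (map (len G) fs). 0 \<le> y" using pos by fastforce
    thus "0 \<le> x" unfolding x by (intro sum_list_nonneg) auto
  qed
qed

lemma anchors_ok:
  assumes "wf_graph G" "p \<in> pts G" "(u,a) \<in> anchors G p"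
  shows "u \<in> nodes G \<and> a \<ge> 0"
  using assms unfolding pts_def wf_graph_def by (cases p) auto

lemma anchors_finite: "finite (anchors G p)" "anchors G p \<noteq> {}"
  by (cases p; simp)+

lemma dist_via_nonneg:
  assumes "wf_graph G" "p \<in> pts G" "q \<in> pts G"
  shows "dist_via G p q \<ge> 0"
  unfolding dist_via_def
proof (subst Min_ge_iff)
  show "finite ((\<lambda>((u,a),(w,b)). a + node_dist G u w + b) ` (anchors G p \<times> anchors G q))"
    using anchors_finite by auto
  show "(\<lambda>((u,a),(w,b)). a + node_dist G u w + b) ` (anchors G p \<times> anchors G q) \<noteq> {}"
    using anchors_finite by auto
  show "\<forall>a\<in>(\<lambda>((u,a),(w,b)). a + node_dist G u w + b) ` (anchors G p \<times> anchors G q). 0 \<le> a"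
  proof (intro ballI, elim imageE, clarify)
    fix u a w b assume h: "(u,a) \<in> anchors G p" "(w,b) \<in> anchors G q"
    have "u \<in> nodes G \<and> a \<ge> 0" by (rule anchors_ok[OF assms(1,2) h(1)])
    moreover have "w \<in> nodes G \<and> b \<ge> 0" by (rule anchors_ok[OF assms(1,3) h(2)])
    ultimately show "0 \<le> a + node_dist G u w + b" using node_dist_nonneg[OF assms(1)] by fastforce
  qed
qed

lemma gdist_nonneg:
  assumes "wf_graph G" "p \<in> pts G" "q \<in> pts G"
  shows "gdist G p q \<ge> 0"
  using dist_via_nonneg[OF assms]
  by (cases p; cases q) auto

lemma last_visit_nonneg:
  assumes "t \<ge> 0" shows "last_visit k \<pi> v t \<ge> 0"
proof -
  let ?S = "{t'. 0 \<le> t' \<and> t' \<le> t \<and> (\<exists>r<k. \<pi> t' r = Node v)}"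
  show ?thesis
  proof (cases "?S = {}")
    case True thus ?thesis unfolding last_visit_def Let_def by simp
  next
    case False
    then obtain x where x: "x \<in> ?S" by blast
    have "bdd_above ?S" by (rule bdd_aboveI[of _ t]) auto
    hence "x \<le> Sup ?S" using x by (rule cSup_upper[rotated])
    thus ?thesis using False x unfolding last_visit_def Let_def by simp
  qed
qed

lemma last_visit_mono:
  assumes "0 \<le> s" "s \<le> t" shows "last_visit k \<pi> v s \<le> last_visit k \<pi> v t"
proof -
  let ?S = "{t'. 0 \<le> t' \<and> t' \<le> s \<and> (\<exists>r<k. \<pi> t' r = Node v)}"
  let ?T = "{t'. 0 \<le> t' \<and> t' \<le> t \<and> (\<exists>r<k. \<pi> t' r = Node v)}"
  show ?thesis
  proof (cases "?S = {}")
    case True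
    thus ?thesis using last_visit_nonneg[of t k \<pi> v] assms unfolding last_visit_def Let_def by simp
  next
    case False
    have sub: "?S \<subseteq> ?T" using assms by auto
    hence ne: "?T \<noteq> {}" using False by blast
    have "bdd_above ?T" by (rule bdd_aboveI[of _ t]) auto
    hence "Sup ?S \<le> Sup ?T" using False sub by (intro cSup_subset_mono) auto
    thus ?thesis using False ne unfolding last_visit_def Let_def by simp
  qed
qed

lemma last_visit_eq:
  assumes "\<forall>t'\<in>{0..b}. \<forall>r<k. \<pi>' t' r = \<pi> t' r" "t \<le> b"
  shows "last_visit k \<pi>' v t = last_visit k \<pi> v t"
proof -
  have "{t'. 0 \<le> t' \<and> t' \<le> t \<and> (\<exists>r<k. \<pi>' t' r = Node v)} =
        {t'. 0 \<le> t' \<and> t' \<le> t \<and> (\<exists>r<k. \<pi> t' r = Node v)}"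
    using assms by auto
  thus ?thesis unfolding last_visit_def by simp
qed

theorem mainTheorem13:
  fixes G :: "('v,'e) mgraph" and k :: nat
    and \<pi> \<pi>' :: "real \<Rightarrow> nat \<Rightarrow> ('v,'e) pt"
    and \<alpha> \<beta> \<delta> \<theta> :: real
  assumes "wf_graph G" and "k \<ge> 1"
    and "strategy G k \<pi>" and "strategy G k \<pi>'"
    and "0 \<le> \<alpha>" and "\<alpha> < \<beta>" and "\<delta> > 0"
    and "dXi G k \<pi> \<alpha> \<beta> \<le> \<delta>"
    and "\<theta> = dk G k (\<pi> \<alpha>) (\<pi> \<beta>)"
    and "\<forall>t\<in>{0..\<beta>}. \<forall>r<k. \<pi>' t r = \<pi> t r"
    and "\<forall>r<k. \<exists>\<gamma>. geodesic G \<gamma> (\<pi> \<beta> r) (\<pi> \<alpha> r) \<and>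
            (\<forall>s\<in>{0..\<theta>}. \<pi>' (\<beta> + s) r = \<gamma> (min s (gdist G (\<pi> \<beta> r) (\<pi> \<alpha> r))))"
  shows "(\<forall>r<k. \<pi>' (\<beta> + \<theta>) r = \<pi> \<alpha> r) \<and>
         (SUP t\<in>{\<alpha>..\<beta>+\<theta>}. Mcost G k \<pi>' t) \<le> (SUP t\<in>{\<alpha>..\<beta>}. Mcost G k \<pi> t) + phi_max G * \<delta>"
proof -
  have wf: "wf_graph G" by fact
  have fin: "finite (nodes G)" "nodes G \<noteq> {}" using wf unfolding wf_graph_def by auto
  have wtpos: "\<And>v. v \<in> nodes G \<Longrightarrow> wt G v > 0" using wf unfolding wf_graph_def by auto
  have wtmax: "\<And>v. v \<in> nodes G \<Longrightarrow> wt G v \<le> phi_max G"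
    unfolding phi_max_def using fin by (intro Max_ge) auto
  obtain v0 where v0: "v0 \<in> nodes G" using fin by blast
  have phipos: "phi_max G > 0" using wtmax[OF v0] wtpos[OF v0] by linarith
  have inpts: "\<And>t r. t \<ge> 0 \<Longrightarrow> r < k \<Longrightarrow> \<pi> t r \<in> pts G"
    using assms(3) unfolding strategy_def by blast
  have dkfin: "finite ((\<lambda>i. gdist G (\<pi> \<alpha> i) (\<pi> \<beta> i)) ` {..<k})" by simp
  have theta_ge: "\<And>r. r < k \<Longrightarrow> gdist G (\<pi> \<alpha> r) (\<pi> \<beta> r) \<le> \<theta>"
    unfolding assms(9) dk_def using dkfin by (intro Max_ge) auto
  have theta_nonneg: "\<theta> \<ge> 0"
    using theta_ge[of 0] gdist_nonneg[OF wf inpts[of \<alpha> 0] inpts[of \<beta> 0]] assms(2,5,6) by simp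
  have theta_delta: "\<theta> \<le> \<delta>" using assms(8,9) unfolding dXi_def by simp
  have part1: "\<forall>r<k. \<pi>' (\<beta> + \<theta>) r = \<pi> \<alpha> r"
  proof (intro allI impI)
    fix r assume r: "r < k"
    obtain \<gamma> where g: "geodesic G \<gamma> (\<pi> \<beta> r) (\<pi> \<alpha> r)"
      and e: "\<forall>s\<in>{0..\<theta>}. \<pi>' (\<beta> + s) r = \<gamma> (min s (gdist G (\<pi> \<beta> r) (\<pi> \<alpha> r)))"
      using assms(11) r by blast
    define D where "D = gdist G (\<pi> \<beta> r) (\<pi> \<alpha> r)"
    have D0: "D \<ge> 0" unfolding D_def using gdist_nonneg[OF wf inpts inpts] r assms(5,6) by simp
    have gd: "\<gamma> D = \<pi> \<alpha> r" "\<gamma> 0 = \<pi> \<beta> r"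
      and gi: "\<forall>s\<in>{0..D}. \<forall>s'\<in>{0..D}. gdist G (\<gamma> s) (\<gamma> s') = \<bar>s - s'\<bar>"
      using g unfolding geodesic_def D_def by auto
    have "gdist G (\<gamma> D) (\<gamma> 0) = \<bar>D - 0\<bar>" using gi D0 by auto
    then have "gdist G (\<pi> \<alpha> r) (\<pi> \<beta> r) = D" using D0 gd by simp
    hence "D \<le> \<theta>" using theta_ge[OF r] by simp
    hence "\<pi>' (\<beta> + \<theta>) r = \<gamma> D" using e theta_nonneg unfolding D_def by (auto simp: min_def)
    thus "\<pi>' (\<beta> + \<theta>) r = \<pi> \<alpha> r" using g unfolding geodesic_def D_def by simp
  qed
  have Mle: "\<And>v t. v \<in> nodes G \<Longrightarrow> wt G v * latency k \<pi> v t \<le> Mcost G k \<pi> t"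
    unfolding Mcost_def using fin by (intro Max_ge) auto
  have Mbound: "Mcost G k \<pi> t \<le> phi_max G * \<beta>" if t: "t \<in> {\<alpha>..\<beta>}" for t
    unfolding Mcost_def
  proof (subst Max_le_iff)
    show "finite ((\<lambda>v. wt G v * latency k \<pi> v t) ` nodes G)" using fin by simp
    show "(\<lambda>v. wt G v * latency k \<pi> v t) ` nodes G \<noteq> {}" using fin by simp
    show "\<forall>a\<in>(\<lambda>v. wt G v * latency k \<pi> v t) ` nodes G. a \<le> phi_max G * \<beta>"
    proof
      fix a assume "a \<in> (\<lambda>v. wt G v * latency k \<pi> v t) ` nodes G"
      then obtain v where v: "v \<in> nodes G" and a: "a = wt G v * latency k \<pi> v t" by blast
      have "latency k \<pi> v t \<le> \<beta>"
        using last_visit_nonneg[of t k \<pi> v] t assms(5) unfolding latency_def by auto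
      hence "a \<le> wt G v * \<beta>" unfolding a using wtpos[OF v] by (simp add: mult_left_mono)
      also have "\<dots> \<le> phi_max G * \<beta>" using wtmax[OF v] assms(5,6)
        by (intro mult_right_mono) auto
      finally show "a \<le> phi_max G * \<beta>" .
    qed
  qed
  have bdd: "bdd_above ((\<lambda>t. Mcost G k \<pi> t) ` {\<alpha>..\<beta>})"
    using Mbound by (intro bdd_aboveI2) 
  have supge: "Mcost G k \<pi> t \<le> (SUP t\<in>{\<alpha>..\<beta>}. Mcost G k \<pi> t)" if "t \<in> {\<alpha>..\<beta>}" for t
    using bdd that by (rule cSUP_upper2) simp
  have part2: "(SUP t\<in>{\<alpha>..\<beta>+\<theta>}. Mcost G k \<pi>' t) \<le> (SUP t\<in>{\<alpha>..\<beta>}. Mcost G k \<pi> t) + phi_max G * \<delta>"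
  proof (rule cSUP_least)
    show "{\<alpha>..\<beta> + \<theta>} \<noteq> {}" using assms(6) theta_nonneg by simp
  next
    fix t assume t: "t \<in> {\<alpha>..\<beta> + \<theta>}"
    show "Mcost G k \<pi>' t \<le> (SUP t\<in>{\<alpha>..\<beta>}. Mcost G k \<pi> t) + phi_max G * \<delta>"
    proof (cases "t \<le> \<beta>")
      case True
      have "Mcost G k \<pi>' t = Mcost G k \<pi> t"
        unfolding Mcost_def latency_def using last_visit_eq[OF assms(10) True] by simp
      also have "\<dots> \<le> (SUP t\<in>{\<alpha>..\<beta>}. Mcost G k \<pi> t)" using supge t True by simp
      finally show ?thesis using mult_pos_pos[OF phipos assms(7)] by linarith
    next
      case False
      show ?thesis
      proof (subst Mcost_def, subst Max_le_iff)
        show "finite ((\<lambda>v. wt G v * latency k \<pi>' v t) ` nodes G)" using fin by simp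
        show "(\<lambda>v. wt G v * latency k \<pi>' v t) ` nodes G \<noteq> {}" using fin by simp
        show "\<forall>a\<in>(\<lambda>v. wt G v * latency k \<pi>' v t) ` nodes G.
                a \<le> (SUP t\<in>{\<alpha>..\<beta>}. Mcost G k \<pi> t) + phi_max G * \<delta>"
        proof
          fix a assume "a \<in> (\<lambda>v. wt G v * latency k \<pi>' v t) ` nodes G"
          then obtain v where v: "v \<in> nodes G" and a: "a = wt G v * latency k \<pi>' v t" by blast
          have "last_visit k \<pi>' v \<beta> \<le> last_visit k \<pi>' v t"
            using False assms(5,6) by (intro last_visit_mono) auto
          moreover have "last_visit k \<pi>' v \<beta> = last_visit k \<pi> v \<beta>"
            using last_visit_eq[OF assms(10)] by simp
          ultimately have "latency k \<pi>' v t \<le> latency k \<pi> v \<beta> + \<delta>"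
            using t theta_delta unfolding latency_def by auto
          hence "a \<le> wt G v * latency k \<pi> v \<beta> + wt G v * \<delta>"
            unfolding a using wtpos[OF v] by (simp add: distrib_left[symmetric] mult_left_mono)
          also have "\<dots> \<le> Mcost G k \<pi> \<beta> + phi_max G * \<delta>"
            using Mle[OF v, of \<beta>] wtmax[OF v] assms(7)
            by (intro add_mono) (auto intro: mult_right_mono)
          also have "\<dots> \<le> (SUP t\<in>{\<alpha>..\<beta>}. Mcost G k \<pi> t) + phi_max G * \<delta>"
            using supge[of \<beta>] assms(6) by simp
          finally show "a \<le> (SUP t\<in>{\<alpha>..\<beta>}. Mcost G k \<pi> t) + phi_max G * \<delta>" .
        qed
      qed
    qed
  qed
  show ?thesis using part1 part2 by blast
qed

end
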